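(* Let $p$ be an odd prime and let $c$ be an integer such that $-c-1$ is a quadratic nonresidue modulo $p$. For every integer $n \ge 1$ define $$q_n = \left\lfloor \frac{(p-1)!\,(n^2 + c)}{p} \right\rfloor.$$ Then for all $n \ge 1$, $q_n$ has a prime factor smaller than $p$, and therefore $q_n$ is composite.
   Formalization: The conclusion that $q_n$ is composite is drawn only for those $n \ge 1$ with $q_n \ge p$. The statement above fails without it. *)

theory Defs
  imports Complex_Main "HOL-Number_Theory.Number_Theory"
begin

definition composite_int :: "int \<Rightarrow> bool" where
  "composite_int m \<longleftrightarrow> m > 1 \<and> \<not> prime m"

definition qseq :: "nat \<Rightarrow> int \<Rightarrow> nat \<Rightarrow> int" where
  "qseq p c n = \<lfloor>real (fact (p - 1)) * (real n ^ 2 + real_of_int c) / real p\<rfloor>"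

end

theory Submission
  imports Defs
begin

lemma qseq_div: "qseq p c n = (fact (p - 1) * (int n ^ 2 + c)) div int p"
proof -
  have "real (fact (p - 1)) * (real n ^ 2 + real_of_int c) / real p
        = real_of_int (fact (p - 1) * (int n ^ 2 + c)) / real_of_int (int p)"
    by simp
  then show ?thesis unfolding qseq_def by (simp only: floor_divide_of_int_eq)
qed

lemma main:
  fixes p :: nat and c :: int and n :: nat
  assumes pr: "prime p" and od: "odd p"
    and leg: "Legendre (- c - 1) (int p) = -1"
  shows "\<exists>l::nat. prime l \<and> l < p \<and> int l dvd qseq p c n"
proof -
  define F :: int where "F = fact (p - 1)"
  define m where "m = int n ^ 2 + c"
  define q where "q = qseq p c n"
  define r where "r = (F * m) mod int p"
  have p2: "p \<ge> 3" using pr od prime_ge_2_nat[OF pr]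
    by (metis dvd_refl le_antisym not_less_eq_eq numeral_2_eq_2 numeral_3_eq_3)
  have qd: "q = (F * m) div int p" unfolding q_def F_def m_def by (rule qseq_div)
  have eq: "F * m = int p * q + r" unfolding qd r_def by simp
  have wil: "[F = -1] (mod int p)" unfolding F_def using wilson_theorem[OF pr] .
  have "[F * m = -1 * m] (mod int p)" using wil cong_mult cong_refl by blast
  hence rm: "r = (- m) mod int p" unfolding r_def cong_def by simp
  have r0: "0 \<le> r" "r < int p" unfolding r_def using p2 by auto
  have r1: "r \<noteq> 1"
  proof
    assume "r = 1"
    hence "[- m = 1] (mod int p)" using rm p2 by (simp add: cong_def)
    hence d: "int p dvd (- m) - 1" by (simp add: cong_iff_dvd_diff)
    have "int n ^ 2 - (- c - 1) = - ((- m) - 1)" by (simp add: m_def)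
    hence "int p dvd int n ^ 2 - (- c - 1)" using d by (simp only: dvd_minus_iff)
    hence "[int n ^ 2 = - c - 1] (mod int p)" by (simp add: cong_iff_dvd_diff)
    hence "QuadRes (int p) (- c - 1)" unfolding QuadRes_def by blast
    thus False using leg unfolding Legendre_def by (auto split: if_splits)
  qed
  show ?thesis
  proof (cases "r = 0")
    case True
    hence "int p dvd F * m" using eq by simp
    moreover have "\<not> int p dvd F"
    proof
      assume "int p dvd F"
      hence "[F = 0] (mod int p)" by (simp add: cong_0_iff)
      hence "[-1 = 0] (mod int p)" using wil by (meson cong_sym cong_trans)
      thus False using p2 by (simp add: cong_0_iff)
    qed
    moreover have "prime (int p)" using pr by simp
    ultimately have "int p dvd m" using prime_dvd_mult_iff by blast
    then obtain k where k: "m = int p * k" by blast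
    have "q = F * k" using eq True k p2 by (simp add: algebra_simps)
    moreover have "(2::int) dvd F"
    proof -
      have "(2::nat) dvd fact (p - 1)" by (rule dvd_fact) (use p2 in auto)
      hence "int 2 dvd int (fact (p - 1))" by (simp only: of_nat_dvd_iff)
      thus ?thesis unfolding F_def by (simp only: of_nat_fact) simp
    qed
    ultimately show ?thesis using p2 unfolding q_def by (intro exI[of _ 2]) auto
  next
    case False
    hence r2: "r \<ge> 2" using r0 r1 by auto
    have "nat r dvd fact (p - 1)" using r0 r2 by (intro dvd_fact) auto
    hence "r dvd F" unfolding F_def using r0
      by (metis of_nat_dvd_iff of_nat_fact int_nat_eq)
    hence "r dvd int p * q" using eq by (metis dvd_add_times_triv_left_iff dvd_mult2 dvd_refl mult.commute dvd_diff add_diff_cancel_right')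
    moreover have "coprime r (int p)"
    proof -
      have "\<not> int p dvd r" using r0 r2 by (auto dest: zdvd_imp_le)
      moreover have "prime (int p)" using pr by simp
      ultimately show ?thesis using prime_imp_coprime coprime_commute by blast
    qed
    ultimately have "r dvd q" by (meson coprime_dvd_mult_right_iff)
    obtain l where l: "prime l" "l dvd nat r" proof -
      have "nat r \<noteq> 1" using r2 by simp
      thus ?thesis using prime_factor_nat[of "nat r"] that by blast
    qed
    have "l \<le> nat r" using l r2 by (intro dvd_imp_le) auto
    hence "l < p" using r0 by linarith
    moreover have "int l dvd q" using l `r dvd q` r0
      by (metis dvd_trans int_nat_eq of_nat_dvd_iff)
    ultimately show ?thesis using l unfolding q_def by blast
  qed
qed

theorem theorem12:
  fixes p :: nat and c :: int
  assumes "prime p" and "odd p"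
    and "Legendre (- c - 1) (int p) = -1"
  shows "\<forall>n::nat. n \<ge> 1 \<longrightarrow>
           (\<exists>l::nat. prime l \<and> l < p \<and> int l dvd qseq p c n) \<and>
           (qseq p c n \<ge> int p \<longrightarrow> composite_int (qseq p c n))"
proof (intro allI impI conjI)
  fix n :: nat
  obtain l where l: "prime l" "l < p" "int l dvd qseq p c n" using main[OF assms] by blast
  thus "\<exists>l::nat. prime l \<and> l < p \<and> int l dvd qseq p c n" by blast
  assume ge: "qseq p c n \<ge> int p"
  have p1: "p > 1" using assms(1) prime_gt_1_nat by blast
  show "composite_int (qseq p c n)" unfolding composite_int_def
  proof
    show "qseq p c n > 1" using ge p1 by linarith
    show "\<not> prime (qseq p c n)"
    proof
      assume pq: "prime (qseq p c n)"
      have "prime (int l)" using l by simp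
      hence "int l = qseq p c n" using primes_dvd_imp_eq[OF _ pq l(3)] by simp
      thus False using l ge by linarith
    qed
  qed
qed

end
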